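(* Let $n\ge1$, $q$ a prime power, and let $\mathcal{F}$ be a covering of $[n]$ with no redundant basic set. If the $\mathcal{F}$-combinatorial metric $d_{\mathcal{F}}$ on $\mathbb{F}_q^n$ admits a MacWilliams-type identity, then $\mathcal{F}$ is a $k$-partition of $[n]$ for some $k$.
   Context: For a covering $\mathcal{F}$ of $[n]$ (a family of subsets, called basic sets, whose union is $[n]$) and $x\in\mathbb{F}_q^n$ with $\mathrm{supp}(x)=\{i:x_i\neq0\}$, $\mathrm{wt}_{\mathcal{F}}(x)=\min\{|\mathcal{A}|:\mathcal{A}\subset\mathcal{F},\ \mathrm{supp}(x)\subset\bigcup_{A\in\mathcal{A}}A\}$ and $d_{\mathcal{F}}(x,y)=\mathrm{wt}_{\mathcal{F}}(x-y)$. A basic set $A$ is redundant if $A\subsetneq B$ for some $B\in\mathcal{F}$. $\mathcal{F}$ is a $k$-partition if it is a partition of $[n]$ all of whose blocks have cardinality $k$. For a linear code $\mathcal{C}\subset\mathbb{F}_q^n$, its dual is $\mathcal{C}^\perp=\{u: \sum_i u_ic_i=0\ \forall c\in\mathcal{C}\}$ and its $\mathcal{F}$-weight enumerator is $W_{\mathcal{C}}(x,y)=\sum_{c\in\mathcal{C}}x^{D-\mathrm{wt}_{\mathcal{F}}(c)}y^{\mathrm{wt}_{\mathcal{F}}(c)}$ with $D=\max_{c\in\mathcal{C}}\mathrm{wt}_{\mathcal{F}}(c)$. The metric $d_{\mathcal{F}}$ admits a MacWilliams-type identity if for all linear codes $\mathcal{C}_1,\mathcal{C}_2\subset\mathbb{F}_q^n$,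 $W_{\mathcal{C}_1}=W_{\mathcal{C}_2}$ implies $W_{\mathcal{C}_1^\perp}=W_{\mathcal{C}_2^\perp}$. *)

theory Defs
  imports Main
begin

definition vecs :: "nat \<Rightarrow> (nat \<Rightarrow> 'a::field) set" where
  "vecs n = {x. \<forall>i. i \<notin> {1..n} \<longrightarrow> x i = 0}"

definition supp :: "(nat \<Rightarrow> 'a::zero) \<Rightarrow> nat set" where
  "supp x = {i. x i \<noteq> 0}"

definition covering :: "nat \<Rightarrow> nat set set \<Rightarrow> bool" where
  "covering n F \<longleftrightarrow> \<Union>F = {1..n}"

definition redundant :: "nat set set \<Rightarrow> nat set \<Rightarrow> bool" where
  "redundant F A \<longleftrightarrow> (\<exists>B\<in>F. A \<subset> B)"

definition no_redundant :: "nat set set \<Rightarrow> bool" where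
  "no_redundant F \<longleftrightarrow> (\<forall>A\<in>F. \<not> redundant F A)"

definition wtF :: "nat set set \<Rightarrow> (nat \<Rightarrow> 'a::zero) \<Rightarrow> nat" where
  "wtF F x = Min {card \<A> | \<A>. \<A> \<subseteq> F \<and> supp x \<subseteq> \<Union>\<A>}"

definition dF :: "nat set set \<Rightarrow> (nat \<Rightarrow> 'a::ab_group_add) \<Rightarrow> (nat \<Rightarrow> 'a) \<Rightarrow> nat" where
  "dF F x y = wtF F (\<lambda>i. x i - y i)"

definition linear_code :: "nat \<Rightarrow> (nat \<Rightarrow> 'a::field) set \<Rightarrow> bool" where
  "linear_code n C \<longleftrightarrow> C \<subseteq> vecs n \<and> (\<lambda>_. 0) \<in> C
     \<and> (\<forall>x\<in>C. \<forall>y\<in>C. (\<lambda>i. x i + y i) \<in> C)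
     \<and> (\<forall>a. \<forall>x\<in>C. (\<lambda>i. a * x i) \<in> C)"

definition dual_code :: "nat \<Rightarrow> (nat \<Rightarrow> 'a::field) set \<Rightarrow> (nat \<Rightarrow> 'a) set" where
  "dual_code n C = {u \<in> vecs n. \<forall>c\<in>C. (\<Sum>i\<in>{1..n}. u i * c i) = 0}"

text \<open>The F-weight enumerator W_C(x,y) = sum over c of x^(D - wt c) y^(wt c),
  represented by its coefficient function: (i,j) maps to the coefficient of x^i y^j.\<close>
definition weight_enum :: "nat set set \<Rightarrow> (nat \<Rightarrow> 'a::field) set \<Rightarrow> nat \<times> nat \<Rightarrow> nat" where
  "weight_enum F C = (let D = Max (wtF F ` C) in
     (\<lambda>(i, j). card {c\<in>C. i = D - wtF F c \<and> j = wtF F c}))"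

definition admits_MacWilliams :: "'a::{finite,field} itself \<Rightarrow> nat \<Rightarrow> nat set set \<Rightarrow> bool" where
  "admits_MacWilliams TYPE('a) n F \<longleftrightarrow>
    (\<forall>(C1 :: (nat \<Rightarrow> 'a) set) (C2 :: (nat \<Rightarrow> 'a) set). linear_code n C1 \<longrightarrow> linear_code n C2 \<longrightarrow>
       weight_enum F C1 = weight_enum F C2 \<longrightarrow>
       weight_enum F (dual_code n C1) = weight_enum F (dual_code n C2))"

definition k_partition :: "nat \<Rightarrow> nat \<Rightarrow> nat set set \<Rightarrow> bool" where
  "k_partition k n F \<longleftrightarrow> \<Union>F = {1..n} \<and> (\<forall>A\<in>F. A \<noteq> {} \<and> card A = k)
     \<and> (\<forall>A\<in>F. \<forall>B\<in>F. A \<noteq> B \<longrightarrow> A \<inter> B = {})"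

end

theory Submission
  imports Defs
begin

lemma finite_vecs: "finite (vecs n :: (nat \<Rightarrow> 'a::{finite,field}) set)"
proof -
  have "vecs n = {f :: nat \<Rightarrow> 'a. \<forall>x. (x \<in> {1..n} \<longrightarrow> f x \<in> UNIV) \<and> (x \<notin> {1..n} \<longrightarrow> f x = 0)}"
    unfolding vecs_def by auto
  then show ?thesis using finite_set_of_finite_funs[of "{1..n}" "UNIV :: 'a set" 0] by simp
qed

lemma finite_F: "covering n F \<Longrightarrow> finite F"
proof -
  assume "covering n F"
  hence "F \<subseteq> Pow {1..n}" unfolding covering_def by auto
  then show "finite F" by (rule finite_subset) simp
qed

lemma wt_set_finite:
  assumes "finite F"
  shows "finite {card \<A> | \<A>. \<A> \<subseteq> F \<and> P \<A>}"
proof -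
  have "{card \<A> | \<A>. \<A> \<subseteq> F \<and> P \<A>} \<subseteq> card ` Pow F" by auto
  then show ?thesis using assms finite_subset by blast
qed

lemma memM: "\<A> \<subseteq> F \<Longrightarrow> supp x \<subseteq> \<Union>\<A> \<Longrightarrow> card \<A> \<in> {card \<A> | \<A>. \<A> \<subseteq> F \<and> supp x \<subseteq> \<Union>\<A>}"
  by (intro CollectI exI[of _ \<A>]) simp

lemma wt_zero:
  assumes "covering n F" "supp x = {}"
  shows "wtF F x = 0"
proof -
  let ?M = "{card \<A> | \<A>. \<A> \<subseteq> F \<and> supp x \<subseteq> \<Union>\<A>}"
  have "card {} \<in> ?M" apply (rule CollectI) apply (rule exI[where x="{}"]) by (simp add: assms(2))
  hence m: "0 \<in> ?M" by simp
  have f: "finite ?M" by (rule wt_set_finite[OF finite_F[OF assms(1)]])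
  have "Min ?M \<le> 0" by (rule Min_le[OF f m])
  thus ?thesis unfolding wtF_def by simp
qed

lemma wt_one:
  assumes "covering n F" "supp x \<subseteq> {1..n}"
  shows "wtF F x = 1 \<longleftrightarrow> supp x \<noteq> {} \<and> (\<exists>A\<in>F. supp x \<subseteq> A)"
proof -
  let ?M = "{card \<A> | \<A>. \<A> \<subseteq> F \<and> supp x \<subseteq> \<Union>\<A>}"
  have fF: "finite F" using finite_F[OF assms(1)] .
  have fin: "finite ?M" by (rule wt_set_finite[OF fF])
  have "card F \<in> ?M" apply (rule CollectI) apply (rule exI[where x=F])
    using assms unfolding covering_def by auto
  hence neM: "?M \<noteq> {}" by auto
  show ?thesis
  proof
    assume w: "wtF F x = 1"
    have "Min ?M \<in> ?M" by (rule Min_in[OF fin neM])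
    hence "1 \<in> ?M" using w unfolding wtF_def by simp
    then obtain \<A> where A: "\<A> \<subseteq> F" "supp x \<subseteq> \<Union>\<A>" "card \<A> = 1" by auto
    then obtain A where "\<A> = {A}" by (meson card_1_singletonE)
    moreover have "supp x \<noteq> {}" using wt_zero[OF assms(1), of x] w by auto
    ultimately show "supp x \<noteq> {} \<and> (\<exists>A\<in>F. supp x \<subseteq> A)" using A by auto
  next
    assume h: "supp x \<noteq> {} \<and> (\<exists>A\<in>F. supp x \<subseteq> A)"
    then obtain A where A: "A \<in> F" "supp x \<subseteq> A" by blast
    have m1: "card {A} \<in> ?M" apply (rule CollectI) apply (rule exI[where x="{A}"]) using A by auto
    have le: "Min ?M \<le> 1" using Min_le[OF fin m1] by simp
    have "\<forall>m\<in>?M. 1 \<le> m"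
    proof
      fix m assume "m \<in> ?M"
      then obtain \<A> where B: "\<A> \<subseteq> F" "supp x \<subseteq> \<Union>\<A>" "m = card \<A>" by auto
      have "finite \<A>" using B(1) fF by (rule finite_subset)
      moreover have "\<A> \<noteq> {}" using B h by auto
      ultimately show "1 \<le> m" using B by (simp add: Suc_leI card_gt_0_iff)
    qed
    hence "1 \<le> Min ?M" using fin neM by simp
    with le show "wtF F x = 1" unfolding wtF_def by simp
  qed
qed

lemma wt_supp_eq: "supp x = supp y \<Longrightarrow> wtF F x = wtF F y"
  unfolding wtF_def by simp

lemma wenum_eq:
  fixes C1 C2 :: "(nat \<Rightarrow> 'a::field) set"
  assumes f: "bij_betw f X C1" and g: "bij_betw g X C2"
    and wt: "\<forall>x\<in>X. wtF F (f x) = wtF F (g x)"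
  shows "weight_enum F C1 = weight_enum F C2"
proof -
  have C1: "C1 = f ` X" and C2: "C2 = g ` X" using f g by (auto simp: bij_betw_def)
  have img: "wtF F ` C1 = wtF F ` C2"
    unfolding C1 C2 image_image using wt by (auto intro: image_cong)
  have key: "card {c\<in>C1. Q (wtF F c)} = card {c\<in>C2. Q (wtF F c)}" for Q
  proof -
    have e1: "{c\<in>C1. Q (wtF F c)} = f ` {x\<in>X. Q (wtF F (f x))}" unfolding C1 by auto
    have e2: "{c\<in>C2. Q (wtF F c)} = g ` {x\<in>X. Q (wtF F (g x))}" unfolding C2 by auto
    have i1: "inj_on f {x\<in>X. Q (wtF F (f x))}" using f by (auto simp: bij_betw_def intro: inj_on_subset)
    have i2: "inj_on g {x\<in>X. Q (wtF F (g x))}" using g by (auto simp: bij_betw_def intro: inj_on_subset)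
    have "{x\<in>X. Q (wtF F (f x))} = {x\<in>X. Q (wtF F (g x))}" using wt by auto
    then show ?thesis unfolding e1 e2 card_image[OF i1] card_image[OF i2] by simp
  qed
  show ?thesis
  proof (rule ext)
    fix p :: "nat \<times> nat"
    obtain i j where p: "p = (i, j)" by fastforce
    show "weight_enum F C1 p = weight_enum F C2 p"
      unfolding weight_enum_def Let_def p img using key[of "\<lambda>w. i = Max (wtF F ` C2) - w \<and> j = w"]
      by simp
  qed
qed

lemma wenum_w1:
  fixes C1 C2 :: "(nat \<Rightarrow> 'a::field) set"
  assumes cov: "covering n F" and e: "weight_enum F C1 = weight_enum F C2"
    and z: "(\<lambda>_. 0) \<in> C1" "(\<lambda>_. 0) \<in> C2" and fin: "finite C1" "finite C2"
  shows "card {c\<in>C1. wtF F c = 1} = card {c\<in>C2. wtF F c = 1}"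
proof -
  define D1 where "D1 = Max (wtF F ` C1)"
  define D2 where "D2 = Max (wtF F ` C2)"
  have w0: "wtF F (\<lambda>_. 0 :: 'a) = 0" by (rule wt_zero[OF cov]) (simp add: supp_def)
  have "(\<lambda>_. 0) \<in> {c\<in>C1. D1 = D1 - wtF F c \<and> 0 = wtF F c}" using z w0 by simp
  hence "card {c\<in>C1. D1 = D1 - wtF F c \<and> 0 = wtF F c} \<noteq> 0" using fin by auto
  hence "weight_enum F C1 (D1, 0) \<noteq> 0" unfolding weight_enum_def Let_def D1_def by simp
  hence "weight_enum F C2 (D1, 0) \<noteq> 0" using e by simp
  hence "card {c\<in>C2. D1 = D2 - wtF F c \<and> 0 = wtF F c} \<noteq> 0" unfolding weight_enum_def Let_def D2_def by simp
  then obtain c where "c \<in> C2" "D1 = D2 - wtF F c" "0 = wtF F c"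
    by (metis (mono_tags, lifting) card.empty empty_Collect_eq)
  hence D: "D1 = D2" by simp
  have s1: "{c\<in>C1. D1 - 1 = D1 - wtF F c \<and> 1 = wtF F c} = {c\<in>C1. wtF F c = 1}" by auto
  have s2: "{c\<in>C2. D2 - 1 = D2 - wtF F c \<and> 1 = wtF F c} = {c\<in>C2. wtF F c = 1}" by auto
  have "weight_enum F C1 (D1 - 1, 1) = card {c\<in>C1. D1 - 1 = D1 - wtF F c \<and> 1 = wtF F c}"
    unfolding weight_enum_def Let_def D1_def[symmetric] by (simp only: prod.case)
  hence "card {c\<in>C1. wtF F c = 1} = weight_enum F C1 (D1 - 1, 1)" using s1 by simp
  also have "\<dots> = weight_enum F C2 (D2 - 1, 1)" using e D by simp
  also have "\<dots> = card {c\<in>C2. D2 - 1 = D2 - wtF F c \<and> 1 = wtF F c}"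
    unfolding weight_enum_def Let_def D2_def[symmetric] by (simp only: prod.case)
  also have "\<dots> = card {c\<in>C2. wtF F c = 1}" using s2 by simp
  finally show ?thesis .
qed

definition code1 :: "(nat \<Rightarrow> 'a::field) \<Rightarrow> (nat \<Rightarrow> 'a) set" where
  "code1 v = range (\<lambda>a i. a * v i)"

lemma supp_vecs: "x \<in> vecs n \<Longrightarrow> supp x \<subseteq> {1..n}"
  unfolding vecs_def supp_def by auto

lemma code1_linear: "x \<in> vecs n \<Longrightarrow> linear_code n (code1 x)"
  unfolding linear_code_def
proof (intro conjI ballI allI)
  assume x: "x \<in> vecs n"
  show "code1 x \<subseteq> vecs n" using x unfolding code1_def vecs_def by auto
  have "(\<lambda>_. 0) = (\<lambda>i. 0 * x i)" by simp
  thus "(\<lambda>_. 0) \<in> code1 x" unfolding code1_def by (rule range_eqI)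
next
  fix y z assume "y \<in> code1 x" "z \<in> code1 x"
  then obtain a b where "y = (\<lambda>i. a * x i)" "z = (\<lambda>i. b * x i)" unfolding code1_def by auto
  hence "(\<lambda>i. y i + z i) = (\<lambda>i. (a + b) * x i)" by (simp add: distrib_right)
  thus "(\<lambda>i. y i + z i) \<in> code1 x" unfolding code1_def by (rule range_eqI)
next
  fix c y assume "y \<in> code1 x"
  then obtain a where "y = (\<lambda>i. a * x i)" unfolding code1_def by auto
  hence "(\<lambda>i. c * y i) = (\<lambda>i. (c * a) * x i)" by (simp add: mult.assoc)
  thus "(\<lambda>i. c * y i) \<in> code1 x" unfolding code1_def by (rule range_eqI)
qed

lemma code1_dual: "dual_code n (code1 x) = {u \<in> vecs n. (\<Sum>i\<in>{1..n}. u i * x i) = 0}"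
proof
  show "dual_code n (code1 x) \<subseteq> {u \<in> vecs n. (\<Sum>i\<in>{1..n}. u i * x i) = 0}"
  proof
    fix u assume u: "u \<in> dual_code n (code1 x)"
    have "(\<lambda>i. 1 * x i) \<in> code1 x" unfolding code1_def by (rule rangeI)
    with u show "u \<in> {u \<in> vecs n. (\<Sum>i\<in>{1..n}. u i * x i) = 0}"
      unfolding dual_code_def by auto
  qed
next
  show "{u \<in> vecs n. (\<Sum>i\<in>{1..n}. u i * x i) = 0} \<subseteq> dual_code n (code1 x)"
  proof
    fix u assume u: "u \<in> {u \<in> vecs n. (\<Sum>i\<in>{1..n}. u i * x i) = 0}"
    have "(\<Sum>i\<in>{1..n}. u i * c i) = 0" if cx: "c \<in> code1 x" for c
    proof -
      obtain a where c: "c = (\<lambda>i. a * x i)" using cx unfolding code1_def by auto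
      have "(\<Sum>i\<in>{1..n}. u i * c i) = a * (\<Sum>i\<in>{1..n}. u i * x i)"
        unfolding c sum_distrib_left by (simp add: algebra_simps)
      thus ?thesis using u by simp
    qed
    thus "u \<in> dual_code n (code1 x)" using u unfolding dual_code_def by auto
  qed
qed

lemma mw_w1:
  fixes v w :: "nat \<Rightarrow> 'a::{finite,field}"
  assumes cov: "covering n F" and mw: "admits_MacWilliams TYPE('a) n F"
    and v: "v \<in> vecs n" "wtF F v = 1" and w: "w \<in> vecs n" "wtF F w = 1"
  shows "card {u \<in> vecs n. (\<Sum>i\<in>{1..n}. u i * v i) = 0 \<and> wtF F u = 1}
       = card {u \<in> vecs n. (\<Sum>i\<in>{1..n}. u i * w i) = 0 \<and> wtF F u = 1}"
proof -
  have nz: "\<exists>i. x i \<noteq> 0" if "x \<in> vecs n" "wtF F x = 1" for x :: "nat \<Rightarrow> 'a"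
    using wt_one[OF cov supp_vecs[OF that(1)]] that(2) unfolding supp_def by auto
  have bij: "bij_betw (\<lambda>a i. a * x i) UNIV (code1 x)" if xv: "x \<in> vecs n" "wtF F x = 1" for x :: "nat \<Rightarrow> 'a"
  proof -
    obtain i where i: "x i \<noteq> 0" using nz[OF xv] by blast
    have "inj (\<lambda>a i. a * x i)"
    proof (rule injI)
      fix a b assume "(\<lambda>i. a * x i) = (\<lambda>i. b * x i)"
      hence "a * x i = b * x i" by meson
      thus "a = b" using i by simp
    qed
    thus ?thesis unfolding bij_betw_def code1_def by simp
  qed
  have wtsc: "wtF F (\<lambda>i. a * x i) = (if a = 0 then 0 else 1)" if "x \<in> vecs n" "wtF F x = 1" for x :: "nat \<Rightarrow> 'a" and a
  proof (cases "a = 0")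
    case True
    then show ?thesis using wt_zero[OF cov, of "\<lambda>i. a * x i"] by (simp add: supp_def)
  next
    case False
    hence "supp (\<lambda>i. a * x i) = supp x" unfolding supp_def by simp
    then show ?thesis using wt_supp_eq[of "\<lambda>i. a * x i" x F] that False by simp
  qed
  have "weight_enum F (code1 v) = weight_enum F (code1 w)"
    by (rule wenum_eq[OF bij[OF v] bij[OF w]]) (simp add: wtsc[OF v] wtsc[OF w])
  hence e: "weight_enum F (dual_code n (code1 v)) = weight_enum F (dual_code n (code1 w))"
    using mw code1_linear[OF v(1)] code1_linear[OF w(1)] unfolding admits_MacWilliams_def by blast
  have z: "(\<lambda>_. 0) \<in> dual_code n (code1 x)" for x :: "nat \<Rightarrow> 'a"
    unfolding code1_dual vecs_def by simp
  have f: "finite (dual_code n (code1 x))" for x :: "nat \<Rightarrow> 'a"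
    unfolding code1_dual by (rule finite_subset[OF _ finite_vecs]) auto
  have "card {c\<in>dual_code n (code1 v). wtF F c = 1} = card {c\<in>dual_code n (code1 w). wtF F c = 1}"
    by (rule wenum_w1[OF cov e z z f f])
  thus ?thesis unfolding code1_dual by (simp add: conj_assoc)
qed

lemma wt1_iff:
  assumes "covering n F" "x \<in> vecs n"
  shows "wtF F x = 1 \<longleftrightarrow> supp x \<noteq> {} \<and> (\<exists>A\<in>F. supp x \<subseteq> A)"
  using wt_one[OF assms(1) supp_vecs[OF assms(2)]] .

lemma dot_e:
  fixes u :: "nat \<Rightarrow> 'a::field"
  assumes "i \<in> {1..n}"
  shows "(\<Sum>k\<in>{1..n}. u k * (if k = i then 1 else 0)) = u i"
proof -
  have "(\<Sum>k\<in>{1..n}. u k * (if k = i then 1 else 0)) = (\<Sum>k\<in>{1..n}. if k = i then u k else 0)"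
    by (rule sum.cong) auto
  also have "\<dots> = u i" using assms by simp
  finally show ?thesis .
qed

lemma dot_e2:
  fixes u :: "nat \<Rightarrow> 'a::field"
  assumes "i \<in> {1..n}" "a \<in> {1..n}"
  shows "(\<Sum>k\<in>{1..n}. u k * ((if k = i then 1 else 0) + (if k = a then 1 else 0))) = u i + u a"
proof -
  have "(\<Sum>k\<in>{1..n}. u k * ((if k = i then 1 else 0) + (if k = a then 1 else 0)))
     = (\<Sum>k\<in>{1..n}. u k * (if k = i then 1 else 0)) + (\<Sum>k\<in>{1..n}. u k * (if k = a then 1 else 0))"
    by (simp add: distrib_left sum.distrib)
  thus ?thesis unfolding dot_e[OF assms(1)] dot_e[OF assms(2)] .
qed

lemma case_b:
  fixes dummy :: "'a::{finite,field} itself"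
  assumes cov: "covering n F" and nored: "no_redundant F"
    and A: "A \<in> F" "i \<in> A" "a \<in> A" "i \<noteq> a" and X: "X \<in> F" "a \<in> X" "i \<notin> X"
  shows "card {u \<in> vecs n. (u::nat\<Rightarrow>'a) i + u a = 0 \<and> wtF F u = 1}
       < card {u \<in> vecs n. (u::nat\<Rightarrow>'a) i = 0 \<and> wtF F u = 1}"
proof -
  let ?S2 = "{u \<in> vecs n. (u::nat\<Rightarrow>'a) i + u a = 0 \<and> wtF F u = 1}"
  let ?S1 = "{u \<in> vecs n. (u::nat\<Rightarrow>'a) i = 0 \<and> wtF F u = 1}"
  define t :: "nat \<Rightarrow> 'a" where "t = (\<lambda>k. if k \<in> X then 1 else 0)"
  define z :: "(nat \<Rightarrow> 'a) \<Rightarrow> (nat \<Rightarrow> 'a)" where "z = (\<lambda>u. u(i := 0))"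
  have Xn: "X \<subseteq> {1..n}" using X cov unfolding covering_def by auto
  have tv: "t \<in> vecs n" using Xn unfolding t_def vecs_def by auto
  have st: "supp t = X" unfolding t_def supp_def by auto
  have t1: "t \<in> ?S1"
  proof -
    have "wtF F t = 1" unfolding wt1_iff[OF cov tv] st using X by auto
    moreover have "t i = 0" using X unfolding t_def by simp
    ultimately show ?thesis using tv by simp
  qed
  have fin1: "finite ?S1" by (rule finite_subset[OF _ finite_vecs]) auto
  have inj: "inj_on z ?S2"
  proof (rule inj_onI)
    fix u v assume u: "u \<in> ?S2" and v: "v \<in> ?S2" and e: "z u = z v"
    have off: "u k = v k" if ki: "k \<noteq> i" for k
    proof -
      have "z u k = z v k" using e by simp
      thus ?thesis using ki unfolding z_def by simp
    qed
    have "u a = v a" using off[of a] A(4) by auto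
    moreover have "u i = - u a" using u by (simp add: eq_neg_iff_add_eq_0)
    moreover have "v i = - v a" using v by (simp add: eq_neg_iff_add_eq_0)
    ultimately have "u i = v i" by simp
    show "u = v"
    proof
      fix k show "u k = v k" using off \<open>u i = v i\<close> by (cases "k = i") auto
    qed
  qed
  have sub: "z ` ?S2 \<subseteq> ?S1 - {t}"
  proof
    fix y assume "y \<in> z ` ?S2"
    then obtain u where u: "u \<in> ?S2" and y: "y = z u" by blast
    have uv: "u \<in> vecs n" and ua: "u i + u a = 0" and uw: "wtF F u = 1" using u by auto
    obtain B where B: "B \<in> F" "supp u \<subseteq> B" and sne: "supp u \<noteq> {}" using uw wt1_iff[OF cov uv] by auto
    have yv: "y \<in> vecs n" using uv unfolding y z_def vecs_def by auto
    have ys: "supp y \<subseteq> supp u" unfolding y z_def supp_def by auto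
    have yne: "supp y \<noteq> {}"
    proof (cases "u i = 0")
      case True
      hence "y = u" unfolding y z_def by auto
      thus ?thesis using sne by simp
    next
      case False
      moreover have "- u i = u a" using ua by (simp add: neg_eq_iff_add_eq_0)
      ultimately have "u a \<noteq> 0" by auto
      hence "a \<in> supp y" unfolding y z_def supp_def using A(4) by auto
      thus ?thesis by auto
    qed
    have yw: "wtF F y = 1" unfolding wt1_iff[OF cov yv] using yne ys B by blast
    have yi: "y i = 0" unfolding y z_def by simp
    have "y \<noteq> t"
    proof
      assume yt: "y = t"
      have "y a = t a" using yt by simp
      hence "u a = 1" using X(2) A(4) unfolding y z_def t_def by simp
      moreover have "- u i = u a" using ua by (simp add: neg_eq_iff_add_eq_0)
      ultimately have "u i \<noteq> 0" by auto
      hence "i \<in> supp u" unfolding supp_def by simp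
      moreover have "X \<subseteq> supp u"
      proof
        fix k assume k: "k \<in> X"
        hence "k \<noteq> i" using X(3) by auto
        have "y k = t k" using yt by simp
        hence "u k = t k" using \<open>k \<noteq> i\<close> unfolding y z_def by simp
        thus "k \<in> supp u" using k unfolding t_def supp_def by simp
      qed
      ultimately have "X \<subseteq> B" "i \<in> B" using B by auto
      hence "X \<subset> B" using X(3) by auto
      thus False using nored X(1) B(1) unfolding no_redundant_def redundant_def by blast
    qed
    thus "y \<in> ?S1 - {t}" using yv yi yw by simp
  qed
  have "card ?S2 = card (z ` ?S2)" by (rule card_image[OF inj, symmetric])
  also have "\<dots> \<le> card (?S1 - {t})" by (rule card_mono[OF _ sub]) (use fin1 in simp)
  also have "\<dots> < card ?S1" by (rule card_Diff1_less[OF fin1 t1])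
  finally show ?thesis .
qed

lemma case_a:
  fixes dummy :: "'a::{finite,field} itself"
  assumes cov: "covering n F" and disj: "\<forall>A\<in>F. \<forall>B\<in>F. A \<noteq> B \<longrightarrow> A \<inter> B = {}"
    and A: "A \<in> F" "i \<in> A" and B: "B \<in> F" "j \<in> B" and lt: "card A < card B"
  shows "card {u \<in> vecs n. (u::nat\<Rightarrow>'a) i \<noteq> 0 \<and> wtF F u = 1}
       < card {u \<in> vecs n. (u::nat\<Rightarrow>'a) j \<noteq> 0 \<and> wtF F u = 1}"
proof -
  let ?Ni = "{u \<in> vecs n. (u::nat\<Rightarrow>'a) i \<noteq> 0 \<and> wtF F u = 1}"
  let ?Nj = "{u \<in> vecs n. (u::nat\<Rightarrow>'a) j \<noteq> 0 \<and> wtF F u = 1}"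
  have An: "A \<subseteq> {1..n}" and Bn: "B \<subseteq> {1..n}" using A B cov unfolding covering_def by auto
  have fA: "finite A" and fB: "finite B" using An Bn finite_subset by auto
  have Ni_char: "supp u \<subseteq> A" if u: "u \<in> ?Ni" for u
  proof -
    have uv: "u \<in> vecs n" using u by simp
    obtain Y where Y: "Y \<in> F" "supp u \<subseteq> Y" using u wt1_iff[OF cov uv] by auto
    have "i \<in> supp u" using u unfolding supp_def by simp
    hence "Y = A" using disj A Y by blast
    thus ?thesis using Y by simp
  qed
  have "card (A - {i}) \<le> card (B - {j})" using lt A B fA fB by simp
  then obtain g0 where g0: "g0 ` (A - {i}) \<subseteq> B - {j}" "inj_on g0 (A - {i})"
    using card_le_inj[of "A - {i}" "B - {j}"] fA fB by auto
  define g where "g = g0(i := j)"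
  have gi: "g i = j" unfolding g_def by simp
  have gsub: "g ` A \<subseteq> B"
  proof
    fix y assume "y \<in> g ` A"
    then obtain x where x: "x \<in> A" "y = g x" by blast
    show "y \<in> B"
    proof (cases "x = i")
      case True thus ?thesis using x gi B by simp
    next
      case False thus ?thesis using x g0(1) unfolding g_def by auto
    qed
  qed
  have ginj: "inj_on g A"
  proof (rule inj_onI)
    fix x y assume x: "x \<in> A" and y: "y \<in> A" and e: "g x = g y"
    have ne: "g x \<noteq> j" if "x \<in> A" "x \<noteq> i" for x
      using that g0(1) unfolding g_def by auto
    show "x = y"
    proof (cases "x = i")
      case True
      thus ?thesis using e ne[OF y] gi by (cases "y = i") auto
    next
      case False
      hence "y \<noteq> i" using e ne[OF x] gi by auto
      thus ?thesis using False e x y g0(2) unfolding g_def by (auto dest: inj_onD)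
    qed
  qed
  have "card (g ` A) = card A" by (rule card_image[OF ginj])
  hence "g ` A \<noteq> B" using lt by auto
  then obtain b where b: "b \<in> B" "b \<notin> g ` A" using gsub by blast
  have bj: "b \<noteq> j" using b gi A(2) by auto
  define \<Phi> :: "(nat \<Rightarrow> 'a) \<Rightarrow> (nat \<Rightarrow> 'a)" where
    "\<Phi> = (\<lambda>u y. if y \<in> g ` A then u (the_inv_into A g y) else 0)"
  have \<Phi>g: "\<Phi> u (g x) = u x" if "x \<in> A" for u x
    using that unfolding \<Phi>_def by (simp add: the_inv_into_f_f[OF ginj])
  define t :: "nat \<Rightarrow> 'a" where "t = (\<lambda>k. if k = j \<or> k = b then 1 else 0)"
  have fin: "finite ?Nj" by (rule finite_subset[OF _ finite_vecs]) auto
  have tN: "t \<in> ?Nj"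
  proof -
    have tv: "t \<in> vecs n" using Bn B b unfolding t_def vecs_def by auto
    have "supp t = {j, b}" unfolding t_def supp_def by auto
    hence "wtF F t = 1" unfolding wt1_iff[OF cov tv] using B b by auto
    thus ?thesis using tv unfolding t_def by simp
  qed
  have inj: "inj_on \<Phi> ?Ni"
  proof (rule inj_onI)
    fix u v assume u: "u \<in> ?Ni" and v: "v \<in> ?Ni" and e: "\<Phi> u = \<Phi> v"
    show "u = v"
    proof
      fix x show "u x = v x"
      proof (cases "x \<in> A")
        case True
        thus ?thesis using \<Phi>g[OF True, of u] \<Phi>g[OF True, of v] e by simp
      next
        case False
        hence "x \<notin> supp u" "x \<notin> supp v" using Ni_char[OF u] Ni_char[OF v] by auto
        thus ?thesis unfolding supp_def by simp
      qed
    qed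
  qed
  have sub: "\<Phi> ` ?Ni \<subseteq> ?Nj - {t}"
  proof
    fix y assume "y \<in> \<Phi> ` ?Ni"
    then obtain u where u: "u \<in> ?Ni" and y: "y = \<Phi> u" by blast
    have ys: "supp y \<subseteq> B" using gsub unfolding y \<Phi>_def supp_def by auto
    have yv: "y \<in> vecs n" using ys Bn unfolding vecs_def supp_def by auto
    have yj: "y j \<noteq> 0" using \<Phi>g[OF A(2), of u] u gi y by simp
    hence "j \<in> supp y" unfolding supp_def by simp
    hence yw: "wtF F y = 1" unfolding wt1_iff[OF cov yv] using ys B by auto
    have "y b = 0" using b unfolding y \<Phi>_def by simp
    moreover have "t b = 1" unfolding t_def by simp
    ultimately have "y \<noteq> t" by auto
    thus "y \<in> ?Nj - {t}" using yv yj yw by simp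
  qed
  have "card ?Ni = card (\<Phi> ` ?Ni)" by (rule card_image[OF inj, symmetric])
  also have "\<dots> \<le> card (?Nj - {t})" by (rule card_mono[OF _ sub]) (use fin in simp)
  also have "\<dots> < card ?Nj" by (rule card_Diff1_less[OF fin tN])
  finally show ?thesis .
qed

lemma card_split:
  "card {u \<in> vecs n. (u::nat\<Rightarrow>'a::{finite,field}) i = 0 \<and> wtF F u = 1}
   + card {u \<in> vecs n. (u::nat\<Rightarrow>'a) i \<noteq> 0 \<and> wtF F u = 1}
   = card {u \<in> vecs n. (u::nat\<Rightarrow>'a) \<in> vecs n \<and> wtF F u = 1}"
proof -
  have f: "finite {u \<in> vecs n. (u::nat\<Rightarrow>'a) \<in> vecs n \<and> wtF F u = 1}"
    by (rule finite_subset[OF _ finite_vecs]) auto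
  have "{u \<in> vecs n. (u::nat\<Rightarrow>'a) \<in> vecs n \<and> wtF F u = 1}
      = {u \<in> vecs n. (u::nat\<Rightarrow>'a) i = 0 \<and> wtF F u = 1} \<union> {u \<in> vecs n. (u::nat\<Rightarrow>'a) i \<noteq> 0 \<and> wtF F u = 1}"
    by auto
  moreover have "card ({u \<in> vecs n. (u::nat\<Rightarrow>'a) i = 0 \<and> wtF F u = 1} \<union> {u \<in> vecs n. (u::nat\<Rightarrow>'a) i \<noteq> 0 \<and> wtF F u = 1})
    = card {u \<in> vecs n. (u::nat\<Rightarrow>'a) i = 0 \<and> wtF F u = 1} + card {u \<in> vecs n. (u::nat\<Rightarrow>'a) i \<noteq> 0 \<and> wtF F u = 1}"
    by (rule card_Un_disjoint) (auto intro: finite_subset[OF _ finite_vecs])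
  ultimately show ?thesis by simp
qed

theorem proposition4:
  fixes n :: nat and F :: "nat set set"
  assumes "n \<ge> 1"
    and "covering n F"
    and "no_redundant F"
    and "admits_MacWilliams TYPE('a::{finite,field}) n F"
  shows "\<exists>k. k_partition k n F"
proof -
  note cov = assms(2) and nored = assms(3) and mw = assms(4)
  define e :: "nat \<Rightarrow> nat \<Rightarrow> 'a" where "e = (\<lambda>i k. if k = i then 1 else 0)"
  have inN: "x \<in> {1..n}" if "x \<in> A" "A \<in> F" for x A
    using that cov unfolding covering_def by auto
  have ev: "e i \<in> vecs n" if "i \<in> {1..n}" for i
    using that unfolding e_def vecs_def by auto
  have ew: "wtF F (e i) = 1" if "i \<in> A" "A \<in> F" for i A
  proof -
    have "supp (e i) = {i}" unfolding e_def supp_def by auto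
    thus ?thesis unfolding wt1_iff[OF cov ev[OF inN[OF that]]] using that by auto
  qed
  have "1 \<in> \<Union>F" using assms(1) cov unfolding covering_def by auto
  then obtain B1 where B1: "B1 \<in> F" "1 \<in> B1" by blast
  have nonempty: "A \<noteq> {}" if "A \<in> F" for A
  proof
    assume "A = {}"
    hence "A \<subset> B1" using B1 by auto
    thus False using nored that B1 unfolding no_redundant_def redundant_def by blast
  qed
  have disj: "\<forall>A\<in>F. \<forall>B\<in>F. A \<noteq> B \<longrightarrow> A \<inter> B = {}"
  proof (intro ballI impI, rule ccontr)
    fix A B assume A: "A \<in> F" and B: "B \<in> F" and ne: "A \<noteq> B" and ov: "A \<inter> B \<noteq> {}"
    obtain a where a: "a \<in> A" "a \<in> B" using ov by blast
    have "\<not> A \<subseteq> B"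
    proof
      assume "A \<subseteq> B"
      hence "A \<subset> B" using ne by auto
      thus False using nored A B unfolding no_redundant_def redundant_def by blast
    qed
    then obtain i where i: "i \<in> A" "i \<notin> B" by blast
    have ia: "i \<noteq> a" using i a by auto
    have iN: "i \<in> {1..n}" and aN: "a \<in> {1..n}" using inN i a A by auto
    define w :: "nat \<Rightarrow> 'a" where "w = (\<lambda>k. (if k = i then 1 else 0) + (if k = a then 1 else 0))"
    have wv: "w \<in> vecs n" using iN aN unfolding w_def vecs_def by auto
    have "supp w = {i, a}" using ia unfolding w_def supp_def by auto
    hence ww: "wtF F w = 1" unfolding wt1_iff[OF cov wv] using A i a by auto
    have "card {u \<in> vecs n. (\<Sum>k\<in>{1..n}. u k * e i k) = 0 \<and> wtF F u = 1}
       = card {u \<in> vecs n. (\<Sum>k\<in>{1..n}. u k * w k) = 0 \<and> wtF F u = 1}"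
      by (rule mw_w1[OF cov mw ev[OF iN] ew[OF i(1) A] wv ww])
    hence "card {u \<in> vecs n. (u::nat\<Rightarrow>'a) i = 0 \<and> wtF F u = 1}
       = card {u \<in> vecs n. (u::nat\<Rightarrow>'a) i + u a = 0 \<and> wtF F u = 1}"
      unfolding e_def w_def dot_e[OF iN] dot_e2[OF iN aN] .
    moreover have "card {u \<in> vecs n. (u::nat\<Rightarrow>'a) i + u a = 0 \<and> wtF F u = 1}
       < card {u \<in> vecs n. (u::nat\<Rightarrow>'a) i = 0 \<and> wtF F u = 1}"
      by (rule case_b[OF cov nored A i(1) a(1) ia B a(2) i(2)])
    ultimately show False by simp
  qed
  have eqc: "card A = card B" if A: "A \<in> F" and B: "B \<in> F" for A B
  proof -
    have lt_false: "False" if A': "A' \<in> F" and B': "B' \<in> F" and lt: "card A' < card B'" for A' B'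
    proof -
      obtain i where i: "i \<in> A'" using nonempty[OF A'] by blast
      obtain j where j: "j \<in> B'" using nonempty[OF B'] by blast
      have iN: "i \<in> {1..n}" and jN: "j \<in> {1..n}" using inN i j A' B' by auto
      have "card {u \<in> vecs n. (\<Sum>k\<in>{1..n}. u k * e i k) = 0 \<and> wtF F u = 1}
         = card {u \<in> vecs n. (\<Sum>k\<in>{1..n}. u k * e j k) = 0 \<and> wtF F u = 1}"
        by (rule mw_w1[OF cov mw ev[OF iN] ew[OF i A'] ev[OF jN] ew[OF j B']])
      hence eq: "card {u \<in> vecs n. (u::nat\<Rightarrow>'a) i = 0 \<and> wtF F u = 1}
         = card {u \<in> vecs n. (u::nat\<Rightarrow>'a) j = 0 \<and> wtF F u = 1}"
        unfolding e_def dot_e[OF iN] dot_e[OF jN] .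
      have "card {u \<in> vecs n. (u::nat\<Rightarrow>'a) i \<noteq> 0 \<and> wtF F u = 1}
         < card {u \<in> vecs n. (u::nat\<Rightarrow>'a) j \<noteq> 0 \<and> wtF F u = 1}"
        by (rule case_a[OF cov disj A' i B' j lt])
      with eq card_split[where 'a='a, of n i F] card_split[where 'a='a, of n j F] show False by linarith
    qed
    show ?thesis
    proof (rule ccontr)
      assume "card A \<noteq> card B"
      hence "card A < card B \<or> card B < card A" by arith
      thus False using lt_false[OF A B] lt_false[OF B A] by blast
    qed
  qed
  have u: "\<Union>F = {1..n}" using cov unfolding covering_def .
  have c: "\<forall>A\<in>F. A \<noteq> {} \<and> card A = card B1"
    using nonempty eqc[OF _ B1(1)] by simp
  have "k_partition (card B1) n F"
    unfolding k_partition_def using u c disj by (intro conjI)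
  thus ?thesis by blast
qed

end
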